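(* For every $k\ge1$ there is a constant $C_k>0$ such that the following holds. Let $\tau\in\mathcal S_k$, $n\ge k$, let $\pi$ be a uniformly random permutation in $\mathcal S_n$, and let $X_{\tau,n}$ be the number of occurrences of $\tau$ in $\pi$. Then for every $t\ge\binom{n-1}{k-1}$, \[\Pr\big(|X_{\tau,n}-E[X_{\tau,n}]|>t\big)\le2\exp\Big(-\frac{t^2}{C_kn^{2k-1}}\Big).\]
   Context: $\mathcal S_n$ is the set of linear permutations $\pi=[\pi_1\ldots\pi_n]$ of $[n]$. An occurrence of a pattern $\tau\in\mathcal S_k$ in $\pi$ is a choice of indices $1\le i_1<\dots<i_k\le n$ such that for all $s,t$, $\pi_{i_s}<\pi_{i_t}$ if and only if $\tau_s<\tau_t$. *)

theory Defs
  imports "HOL-Analysis.Analysis" "HOL-Combinatorics.Permutations"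
begin

definition perms :: "nat \<Rightarrow> (nat \<Rightarrow> nat) set" where
  "perms n = {p. p permutes {1..n}}"

definition occurrences :: "nat \<Rightarrow> (nat \<Rightarrow> nat) \<Rightarrow> nat \<Rightarrow> (nat \<Rightarrow> nat) \<Rightarrow> nat list set" where
  "occurrences k tau n p =
     {is. length is = k \<and> sorted_wrt (<) is \<and> set is \<subseteq> {1..n} \<and>
          (\<forall>s\<in>{1..k}. \<forall>t\<in>{1..k}. p (is ! (s - 1)) < p (is ! (t - 1)) \<longleftrightarrow> tau s < tau t)}"

definition occ_count :: "nat \<Rightarrow> (nat \<Rightarrow> nat) \<Rightarrow> nat \<Rightarrow> (nat \<Rightarrow> nat) \<Rightarrow> real" where
  "occ_count k tau n p = real (card (occurrences k tau n p))"

definition occ_mean :: "nat \<Rightarrow> (nat \<Rightarrow> nat) \<Rightarrow> nat \<Rightarrow> real" where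
  "occ_mean k tau n = (\<Sum>p\<in>perms n. occ_count k tau n p) / real (card (perms n))"

definition dev_prob :: "nat \<Rightarrow> (nat \<Rightarrow> nat) \<Rightarrow> nat \<Rightarrow> real \<Rightarrow> real" where
  "dev_prob k tau n t =
     real (card {p\<in>perms n. \<bar>occ_count k tau n p - occ_mean k tau n\<bar> > t})
       / real (card (perms n))"

end

theory Submission
  imports Defs "HOL-Probability.Probability"
begin


lemma finite_hoeffding:
  fixes g :: "'a \<Rightarrow> real"
  assumes fin: "finite S" and ne: "S \<noteq> {}" and l: "l \<ge> 0"
    and bd: "\<And>x. x \<in> S \<Longrightarrow> g x \<in> {a..b}"
  shows "(\<Sum>x\<in>S. exp (l * (g x - (\<Sum>y\<in>S. g y) / card S))) / card S \<le> exp (l\<^sup>2 * (b - a)\<^sup>2 / 8)"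
proof (cases "l = 0")
  case True
  then show ?thesis using fin ne by simp
next
  case False
  hence lpos: "l > 0" using l by simp
  interpret P: prob_space "measure_pmf (pmf_of_set S)" by (rule prob_space_measure_pmf)
  interpret I: interval_bounded_random_variable "measure_pmf (pmf_of_set S)" g a b
  proof
    show "g \<in> borel_measurable (measure_pmf (pmf_of_set S))" by simp
    show "AE x in measure_pmf (pmf_of_set S). g x \<in> {a..b}"
      using bd fin ne by (auto simp: AE_measure_pmf_iff)
  qed
  have E: "measure_pmf.expectation (pmf_of_set S) g = (\<Sum>y\<in>S. g y) / card S"
    using fin ne by (simp add: integral_pmf_of_set)
  have "nn_integral (measure_pmf (pmf_of_set S)) (\<lambda>x. exp (l * (g x - measure_pmf.expectation (pmf_of_set S) g))) \<le> ennreal (exp (l\<^sup>2 * (b - a)\<^sup>2 / 8))"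
    by (rule I.Hoeffdings_lemma_nn_integral[OF lpos])
  also have "nn_integral (measure_pmf (pmf_of_set S)) (\<lambda>x. exp (l * (g x - measure_pmf.expectation (pmf_of_set S) g)))
     = ennreal ((\<Sum>x\<in>S. exp (l * (g x - (\<Sum>y\<in>S. g y) / card S))) / card S)"
    using fin ne unfolding E
    by (simp add: nn_integral_pmf_of_set sum_nonneg ennreal_of_nat_eq_real_of_nat divide_ennreal card_gt_0_iff)
  finally show ?thesis by (simp add: ennreal_le_iff)
qed



lemma sum_perms_split:
  assumes "finite A" "A \<noteq> {}"
  shows "(\<Sum>xs\<in>permutations_of_set A. h xs) = (\<Sum>a\<in>A. \<Sum>ys\<in>permutations_of_set (A - {a}). h (a # ys))"
proof -
  have "(\<Sum>xs\<in>permutations_of_set A. h xs) = (\<Sum>xs\<in>(\<Union>x\<in>A. (\<lambda>xs. x # xs) ` permutations_of_set (A - {x})). h xs)"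
    by (subst permutations_of_set_nonempty[OF assms(2)]) simp
  also have "\<dots> = (\<Sum>a\<in>A. \<Sum>xs\<in>(\<lambda>xs. a # xs) ` permutations_of_set (A - {a}). h xs)"
    by (rule sum.UNION_disjoint) (use assms in auto)
  also have "\<dots> = (\<Sum>a\<in>A. \<Sum>ys\<in>permutations_of_set (A - {a}). h (a # ys))"
    by (rule sum.cong[OF refl], subst sum.reindex) (auto simp: inj_on_def)
  finally show ?thesis .
qed

lemma transpose_image_Diff:
  assumes "a \<in> A" "b \<in> A"
  shows "Transposition.transpose a b ` (A - {a}) = A - {b}"
proof -
  have "Transposition.transpose a b ` (A - {a}) = Transposition.transpose a b ` A - Transposition.transpose a b ` {a}"
    by (rule image_set_diff[OF inj_transpose])
  thus ?thesis using assms by simp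
qed

lemma coupling:
  fixes f :: "'a list \<Rightarrow> real"
  assumes fin: "finite A" and a: "a \<in> A" and b: "b \<in> A"
    and H: "\<And>xs a b. xs \<in> permutations_of_set A \<Longrightarrow> a \<in> A \<Longrightarrow> b \<in> A \<Longrightarrow> \<bar>f (map (Transposition.transpose a b) xs) - f xs\<bar> \<le> c"
  shows "\<bar>(\<Sum>ys\<in>permutations_of_set (A - {b}). f (b # ys)) - (\<Sum>ys\<in>permutations_of_set (A - {a}). f (a # ys))\<bar>
          \<le> real (card (permutations_of_set (A - {a}))) * c"
proof -
  let ?s = "Transposition.transpose a b"
  have inj: "inj_on (map ?s) (permutations_of_set (A - {a}))"
    by (intro inj_onI) (simp add: inj_map_eq_map inj_transpose)
  have img: "map ?s ` permutations_of_set (A - {a}) = permutations_of_set (A - {b})"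
  proof -
    have "map ?s ` permutations_of_set (A - {a}) = permutations_of_set (?s ` (A - {a}))"
      by (rule permutations_of_set_image_inj[symmetric]) simp
    thus ?thesis by (simp only: transpose_image_Diff[OF a b])
  qed
  have "(\<Sum>ys\<in>permutations_of_set (A - {b}). f (b # ys)) = (\<Sum>ys\<in>permutations_of_set (A - {a}). f (b # map ?s ys))"
    by (subst img[symmetric], subst sum.reindex[OF inj]) simp
  also have "\<dots> = (\<Sum>ys\<in>permutations_of_set (A - {a}). f (map ?s (a # ys)))" by simp
  finally have "(\<Sum>ys\<in>permutations_of_set (A - {b}). f (b # ys)) - (\<Sum>ys\<in>permutations_of_set (A - {a}). f (a # ys))
     = (\<Sum>ys\<in>permutations_of_set (A - {a}). f (map ?s (a # ys)) - f (a # ys))"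
    by (simp add: sum_subtractf)
  also have "\<bar>\<dots>\<bar> \<le> (\<Sum>ys\<in>permutations_of_set (A - {a}). \<bar>f (map ?s (a # ys)) - f (a # ys)\<bar>)"
    by (rule sum_abs)
  also have "\<dots> \<le> (\<Sum>ys\<in>permutations_of_set (A - {a}). c)"
  proof (rule sum_mono)
    fix ys assume ys: "ys \<in> permutations_of_set (A - {a})"
    hence "a # ys \<in> permutations_of_set A" using a
      by (auto simp: permutations_of_set_def)
    thus "\<bar>f (map ?s (a # ys)) - f (a # ys)\<bar> \<le> c" by (rule H[OF _ a b])
  qed
  finally show ?thesis by simp
qed



lemma perm_mgf:
  fixes f :: "'a list \<Rightarrow> real" and c l :: real
  assumes fin: "finite A" and c: "c \<ge> 0" and l: "l \<ge> 0"
    and H: "\<And>xs a b. xs \<in> permutations_of_set A \<Longrightarrow> a \<in> A \<Longrightarrow> b \<in> A \<Longrightarrow> \<bar>f (map (Transposition.transpose a b) xs) - f xs\<bar> \<le> c"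
  shows "(\<Sum>xs\<in>permutations_of_set A. exp (l * (f xs - (\<Sum>ys\<in>permutations_of_set A. f ys) / card (permutations_of_set A))))
     \<le> card (permutations_of_set A) * exp (card A * l\<^sup>2 * c\<^sup>2 / 8)"
  using fin H
proof (induction "card A" arbitrary: A f)
  case 0
  hence "A = {}" by simp
  thus ?case by simp
next
  case (Suc m A f)
  have finA: "finite A" by fact
  have ne: "A \<noteq> {}" using Suc.hyps(2) by auto
  have cardA: "card A = Suc m" using Suc.hyps(2) by simp
  have cd: "card (A - {a}) = m" if "a \<in> A" for a using that cardA finA by simp
  have cP: "card (permutations_of_set (A - {a})) = fact m" if "a \<in> A" for a
    using cd[OF that] finA by simp
  have cPA: "card (permutations_of_set A) = fact (Suc m)" using cardA finA by simp
  define g where "g a = (\<Sum>ys\<in>permutations_of_set (A - {a}). f (a # ys)) / fact m" for a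
  define \<mu> where "\<mu> = (\<Sum>ys\<in>permutations_of_set A. f ys) / card (permutations_of_set A)"
  define E where "E = exp (m * l\<^sup>2 * c\<^sup>2 / 8)"
  have fpos: "(fact m :: real) > 0" by simp
  have IH: "(\<Sum>ys\<in>permutations_of_set (A - {a}). exp (l * (f (a # ys) - g a))) \<le> fact m * E" if a: "a \<in> A" for a
  proof -
    have "(\<Sum>ys\<in>permutations_of_set (A - {a}). exp (l * ((\<lambda>ys. f (a # ys)) ys - (\<Sum>zs\<in>permutations_of_set (A - {a}). (\<lambda>ys. f (a # ys)) zs) / card (permutations_of_set (A - {a})))))
      \<le> card (permutations_of_set (A - {a})) * exp (card (A - {a}) * l\<^sup>2 * c\<^sup>2 / 8)"
    proof (rule Suc.hyps(1))
      show "m = card (A - {a})" using cd[OF a] by simp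
      show "finite (A - {a})" using finA by simp
      fix xs a' b' assume xs: "xs \<in> permutations_of_set (A - {a})" and a': "a' \<in> A - {a}" and b': "b' \<in> A - {a}"
      have "a # xs \<in> permutations_of_set A" using xs a by (auto simp: permutations_of_set_def)
      hence "\<bar>f (map (Transposition.transpose a' b') (a # xs)) - f (a # xs)\<bar> \<le> c"
        using a' b' by (intro Suc.prems(2)) auto
      moreover have "Transposition.transpose a' b' a = a" using a' b' by auto
      ultimately show "\<bar>f (a # map (Transposition.transpose a' b') xs) - f (a # xs)\<bar> \<le> c" by simp
    qed
    thus ?thesis using cP[OF a] cd[OF a] by (simp add: g_def E_def)
  qed
  have coup: "g b - g a \<le> c" if a: "a \<in> A" and b: "b \<in> A" for a b
  proof -
    have "\<bar>(\<Sum>ys\<in>permutations_of_set (A - {b}). f (b # ys)) - (\<Sum>ys\<in>permutations_of_set (A - {a}). f (a # ys))\<bar>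
          \<le> real (card (permutations_of_set (A - {a}))) * c"
      by (rule coupling[OF finA a b Suc.prems(2)])
    hence "\<bar>fact m * g b - fact m * g a\<bar> \<le> fact m * c" using cP[OF a] by (simp add: g_def)
    hence "fact m * (g b - g a) \<le> fact m * c" by (simp add: algebra_simps)
    thus ?thesis using fpos by simp
  qed
  have mu: "\<mu> = (\<Sum>a\<in>A. g a) / card A"
  proof -
    have "(\<Sum>ys\<in>permutations_of_set A. f ys) = (\<Sum>a\<in>A. fact m * g a)"
      by (subst sum_perms_split[OF finA ne]) (simp add: g_def)
    hence "\<mu> = (fact m * (\<Sum>a\<in>A. g a)) / (fact m * real (Suc m))"
      unfolding \<mu>_def cPA by (simp only: sum_distrib_left[symmetric] of_nat_fact fact_Suc mult.commute of_nat_mult of_nat_id)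
    also have "\<dots> = (\<Sum>a\<in>A. g a) / real (Suc m)" by (rule mult_divide_mult_cancel_left) (use fpos in simp)
    finally show ?thesis using cardA by simp
  qed
  have "(\<Sum>xs\<in>permutations_of_set A. exp (l * (f xs - \<mu>)))
      = (\<Sum>a\<in>A. exp (l * (g a - \<mu>)) * (\<Sum>ys\<in>permutations_of_set (A - {a}). exp (l * (f (a # ys) - g a))))"
    by (subst sum_perms_split[OF finA ne]) (simp add: sum_distrib_left exp_add[symmetric] algebra_simps)
  also have "\<dots> \<le> (\<Sum>a\<in>A. exp (l * (g a - \<mu>)) * (fact m * E))"
    by (intro sum_mono mult_left_mono IH) auto
  also have "\<dots> = fact m * E * (\<Sum>a\<in>A. exp (l * (g a - \<mu>)))"
    by (simp add: sum_distrib_left sum_distrib_right algebra_simps)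
  also have "(\<Sum>a\<in>A. exp (l * (g a - \<mu>))) \<le> card A * exp (l\<^sup>2 * c\<^sup>2 / 8)"
  proof -
    define lo where "lo = Min (g ` A)"
    have "lo \<in> g ` A" unfolding lo_def using finA ne by (intro Min_in) auto
    then obtain b where b: "b \<in> A" "lo = g b" by auto
    have bd: "g a \<in> {lo..lo + c}" if "a \<in> A" for a
      using that coup[OF b(1) that] finA unfolding lo_def by (auto simp: b(2)[symmetric] lo_def)
    have "(\<Sum>a\<in>A. exp (l * (g a - (\<Sum>y\<in>A. g y) / card A))) / card A \<le> exp (l\<^sup>2 * (lo + c - lo)\<^sup>2 / 8)"
      by (rule finite_hoeffding[OF finA ne l bd])
    thus ?thesis using ne finA by (simp add: mu field_simps card_gt_0_iff)
  qed
  hence "fact m * E * (\<Sum>a\<in>A. exp (l * (g a - \<mu>))) \<le> fact m * E * (card A * exp (l\<^sup>2 * c\<^sup>2 / 8))"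
    by (intro mult_left_mono) (auto simp: E_def)
  also have "\<dots> = card (permutations_of_set A) * exp (card A * l\<^sup>2 * c\<^sup>2 / 8)"
    unfolding cPA cardA E_def by (simp add: exp_add[symmetric] algebra_simps add_divide_distrib)
  finally show ?case unfolding \<mu>_def .
qed



lemma markov_exp:
  fixes h :: "'a \<Rightarrow> real"
  assumes "finite S" "l \<ge> 0"
  shows "real (card {x\<in>S. h x > t}) \<le> exp (- (l * t)) * (\<Sum>x\<in>S. exp (l * h x))"
proof -
  have "real (card {x\<in>S. h x > t}) * exp (l * t) = (\<Sum>x\<in>{x\<in>S. h x > t}. exp (l * t))" by simp
  also have "\<dots> \<le> (\<Sum>x\<in>{x\<in>S. h x > t}. exp (l * h x))"
    using assms(2) by (intro sum_mono) (auto intro: mult_left_mono)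
  also have "\<dots> \<le> (\<Sum>x\<in>S. exp (l * h x))"
    using assms(1) by (intro sum_mono2) auto
  finally show ?thesis by (simp add: exp_minus field_simps)
qed

lemma one_tail:
  fixes f :: "'a list \<Rightarrow> real" and c t :: real
  assumes fin: "finite A" and c: "c > 0" and t: "t > 0" and A: "card A > 0"
    and H: "\<And>xs a b. xs \<in> permutations_of_set A \<Longrightarrow> a \<in> A \<Longrightarrow> b \<in> A \<Longrightarrow> \<bar>f (map (Transposition.transpose a b) xs) - f xs\<bar> \<le> c"
  shows "real (card {xs\<in>permutations_of_set A. f xs - (\<Sum>ys\<in>permutations_of_set A. f ys) / card (permutations_of_set A) > t})
     \<le> card (permutations_of_set A) * exp (- (2 * t\<^sup>2 / (card A * c\<^sup>2)))"
proof -
  define m where "m = real (card A)"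
  have m: "m > 0" using A by (simp add: m_def)
  define l where "l = 4 * t / (m * c\<^sup>2)"
  have l: "l \<ge> 0" using m c t by (simp add: l_def)
  let ?\<mu> = "(\<Sum>ys\<in>permutations_of_set A. f ys) / card (permutations_of_set A)"
  have "real (card {xs\<in>permutations_of_set A. f xs - ?\<mu> > t}) \<le> exp (- (l * t)) * (\<Sum>xs\<in>permutations_of_set A. exp (l * (f xs - ?\<mu>)))"
    by (rule markov_exp[OF finite_permutations_of_set l])
  also have "\<dots> \<le> exp (- (l * t)) * (card (permutations_of_set A) * exp (card A * l\<^sup>2 * c\<^sup>2 / 8))"
    by (intro mult_left_mono perm_mgf[OF fin _ l H]) (use c in auto)
  also have "\<dots> = card (permutations_of_set A) * exp (- (l * t) + m * l\<^sup>2 * c\<^sup>2 / 8)"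
    by (simp add: m_def mult_exp_exp)
  also have "- (l * t) + m * l\<^sup>2 * c\<^sup>2 / 8 = - (2 * t\<^sup>2 / (m * c\<^sup>2))"
    using m c by (simp add: l_def field_simps power2_eq_square)
  finally show ?thesis by (simp add: m_def)
qed

lemma two_tail:
  fixes f :: "'a list \<Rightarrow> real" and c t :: real
  assumes fin: "finite A" and c: "c > 0" and t: "t > 0" and A: "card A > 0"
    and H: "\<And>xs a b. xs \<in> permutations_of_set A \<Longrightarrow> a \<in> A \<Longrightarrow> b \<in> A \<Longrightarrow> \<bar>f (map (Transposition.transpose a b) xs) - f xs\<bar> \<le> c"
  shows "real (card {xs\<in>permutations_of_set A. \<bar>f xs - (\<Sum>ys\<in>permutations_of_set A. f ys) / card (permutations_of_set A)\<bar> > t})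
     \<le> 2 * card (permutations_of_set A) * exp (- (2 * t\<^sup>2 / (card A * c\<^sup>2)))"
proof -
  let ?P = "permutations_of_set A"
  let ?\<mu> = "(\<Sum>ys\<in>?P. f ys) / card ?P"
  have H': "\<bar>(\<lambda>xs. - f xs) (map (Transposition.transpose a b) xs) - (\<lambda>xs. - f xs) xs\<bar> \<le> c"
    if "xs \<in> ?P" "a \<in> A" "b \<in> A" for xs a b using H[OF that] by simp
  have 1: "real (card {xs\<in>?P. f xs - ?\<mu> > t}) \<le> card ?P * exp (- (2 * t\<^sup>2 / (card A * c\<^sup>2)))"
    by (rule one_tail[OF fin c t A H])
  have 2: "real (card {xs\<in>?P. (\<lambda>xs. - f xs) xs - (\<Sum>ys\<in>?P. (\<lambda>xs. - f xs) ys) / card ?P > t}) \<le> card ?P * exp (- (2 * t\<^sup>2 / (card A * c\<^sup>2)))"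
    by (rule one_tail[OF fin c t A H'])
  have eq: "{xs\<in>?P. (\<lambda>xs. - f xs) xs - (\<Sum>ys\<in>?P. (\<lambda>xs. - f xs) ys) / card ?P > t} = {xs\<in>?P. ?\<mu> - f xs > t}"
    by (simp add: sum_negf)
  have "{xs\<in>?P. \<bar>f xs - ?\<mu>\<bar> > t} \<subseteq> {xs\<in>?P. f xs - ?\<mu> > t} \<union> {xs\<in>?P. ?\<mu> - f xs > t}" by auto
  hence "card {xs\<in>?P. \<bar>f xs - ?\<mu>\<bar> > t} \<le> card ({xs\<in>?P. f xs - ?\<mu> > t} \<union> {xs\<in>?P. ?\<mu> - f xs > t})"
    by (intro card_mono) auto
  also have "\<dots> \<le> card {xs\<in>?P. f xs - ?\<mu> > t} + card {xs\<in>?P. ?\<mu> - f xs > t}" by (rule card_Un_le)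
  finally have "real (card {xs\<in>?P. \<bar>f xs - ?\<mu>\<bar> > t}) \<le> real (card {xs\<in>?P. f xs - ?\<mu> > t}) + real (card {xs\<in>?P. ?\<mu> - f xs > t})"
    by linarith
  thus ?thesis using 1 2 unfolding eq by linarith
qed



definition Dset :: "nat \<Rightarrow> nat \<Rightarrow> nat \<Rightarrow> nat list set" where
  "Dset n k x = {ws. length ws = k \<and> sorted_wrt (<) ws \<and> set ws \<subseteq> {1..n} \<and> x \<in> set ws}"

lemma card_Dset:
  assumes x: "x \<in> {1..n}"
  shows "card (Dset n k x) \<le> (n - 1) choose (k - 1)"
proof -
  let ?T = "{B. B \<subseteq> {1..n} - {x} \<and> card B = k - 1}"
  have inj: "inj_on set (Dset n k x)"
    by (intro inj_onI) (auto simp: Dset_def intro: strict_sorted_equal)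
  have sub: "set ` Dset n k x \<subseteq> insert x ` ?T"
  proof
    fix S assume "S \<in> set ` Dset n k x"
    then obtain ws where ws: "ws \<in> Dset n k x" "S = set ws" by auto
    have "distinct ws" using ws(1) by (auto simp: Dset_def strict_sorted_iff)
    hence cS: "card S = k" using ws by (simp add: Dset_def distinct_card)
    have xS: "x \<in> S" "S \<subseteq> {1..n}" using ws by (auto simp: Dset_def)
    have "S = insert x (S - {x})" using xS by auto
    moreover have "S - {x} \<in> ?T" using xS cS finite_subset[OF xS(2)] by auto
    ultimately show "S \<in> insert x ` ?T" by blast
  qed
  have finT: "finite ?T" by (rule finite_subset[of _ "Pow ({1..n})"]) auto
  have "card (Dset n k x) = card (set ` Dset n k x)" by (rule card_image[OF inj, symmetric])
  also have "\<dots> \<le> card (insert x ` ?T)" by (rule card_mono[OF finite_imageI[OF finT] sub])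
  also have "\<dots> \<le> card ?T" by (rule card_image_le[OF finT])
  also have "\<dots> = card ({1..n} - {x}) choose (k - 1)" by (rule n_subsets) simp
  also have "card ({1..n} - {x}) = n - 1" using x by simp
  finally show ?thesis .
qed

lemma finite_occ: "finite (occurrences k tau n p)"
  by (rule finite_subset[OF _ finite_lists_length_eq[of "{1..n}" k]]) (auto simp: occurrences_def)

lemma occ_diff:
  assumes p: "p permutes {1..n}" and a: "a \<in> {1..n}" and b: "b \<in> {1..n}"
  shows "\<bar>occ_count k tau n (Transposition.transpose a b \<circ> p) - occ_count k tau n p\<bar> \<le> 2 * real ((n - 1) choose (k - 1))"
proof -
  define q where "q = Transposition.transpose a b \<circ> p"
  define i0 where "i0 = inv p a"
  define j0 where "j0 = inv p b"
  have i0: "i0 \<in> {1..n}" "p i0 = a" unfolding i0_def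
    by (simp only: permutes_in_image[OF permutes_inv[OF p]] a, rule permutes_inverses(1)[OF p])
  have j0: "j0 \<in> {1..n}" "p j0 = b" unfolding j0_def
    by (simp only: permutes_in_image[OF permutes_inv[OF p]] b, rule permutes_inverses(1)[OF p])
  have injp: "inj p" using p by (rule permutes_inj)
  define D where "D = Dset n k i0 \<union> Dset n k j0"
  let ?Op = "occurrences k tau n p" and ?Oq = "occurrences k tau n q"
  have key: "ws \<in> ?Op \<longleftrightarrow> ws \<in> ?Oq" if "ws \<notin> D" for ws
  proof (cases "length ws = k \<and> sorted_wrt (<) ws \<and> set ws \<subseteq> {1..n}")
    case True
    hence nin: "i0 \<notin> set ws" "j0 \<notin> set ws" using that by (auto simp: D_def Dset_def)
    have qp: "q y = p y" if "y \<in> set ws" for y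
    proof -
      have "p y \<noteq> a" using nin that i0 injp by (metis injD)
      moreover have "p y \<noteq> b" using nin that j0 injp by (metis injD)
      ultimately show ?thesis by (simp add: q_def)
    qed
    have "\<forall>s\<in>{1..k}. q (ws ! (s - 1)) = p (ws ! (s - 1))"
      using True by (auto intro!: qp nth_mem)
    thus ?thesis unfolding occurrences_def by auto
  next
    case False
    thus ?thesis unfolding occurrences_def by auto
  qed
  have eqD: "?Op - D = ?Oq - D" using key by auto
  have finD: "finite D" unfolding D_def Dset_def
    by (rule finite_subset[OF _ finite_lists_length_eq[of "{1..n}" k]]) auto
  have cD: "card D \<le> 2 * ((n - 1) choose (k - 1))"
  proof -
    have "card D \<le> card (Dset n k i0) + card (Dset n k j0)" unfolding D_def by (rule card_Un_le)
    thus ?thesis using card_Dset[OF i0(1), of k] card_Dset[OF j0(1), of k] by linarith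
  qed
  have split: "card Z = card (Z \<inter> D) + card (Z - D)" if "finite Z" for Z :: "nat list set"
  proof -
    have "Z = (Z \<inter> D) \<union> (Z - D)" by auto
    hence "card Z = card ((Z \<inter> D) \<union> (Z - D))" by simp
    also have "\<dots> = card (Z \<inter> D) + card (Z - D)" by (rule card_Un_disjoint) (use that in auto)
    finally show ?thesis .
  qed
  have "card (?Op \<inter> D) \<le> card D" "card (?Oq \<inter> D) \<le> card D"
    using finD by (auto intro: card_mono)
  moreover have "card ?Op = card (?Op \<inter> D) + card (?Op - D)" by (rule split[OF finite_occ])
  moreover have "card ?Oq = card (?Oq \<inter> D) + card (?Op - D)" unfolding eqD by (rule split[OF finite_occ])
  ultimately have "\<bar>real (card ?Oq) - real (card ?Op)\<bar> \<le> real (card D)" by linarith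
  also have "\<dots> \<le> 2 * real ((n - 1) choose (k - 1))" using cD by linarith
  finally show ?thesis unfolding occ_count_def q_def .
qed



definition tofun :: "nat \<Rightarrow> nat list \<Rightarrow> nat \<Rightarrow> nat" where
  "tofun n xs = (\<lambda>i. if i \<in> {1..n} then xs ! (i - 1) else i)"

lemma len_P: "xs \<in> permutations_of_set {1..n} \<Longrightarrow> length xs = n"
  using length_finite_permutations_of_set by fastforce

lemma tofun_perm:
  assumes xs: "xs \<in> permutations_of_set {1..n}"
  shows "tofun n xs \<in> perms n"
proof -
  have len: "length xs = n" using len_P[OF xs] .
  have d: "distinct xs" "set xs = {1..n}" using xs by (auto simp: permutations_of_set_def)
  have inj: "inj_on (tofun n xs) {1..n}"
  proof (rule inj_onI)
    fix i j assume i: "i \<in> {1..n}" and j: "j \<in> {1..n}" and e: "tofun n xs i = tofun n xs j"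
    hence "xs ! (i - 1) = xs ! (j - 1)" by (simp add: tofun_def)
    moreover have "i - 1 < length xs" "j - 1 < length xs" using i j len by auto
    ultimately have "i - 1 = j - 1" using d(1) nth_eq_iff_index_eq by blast
    thus "i = j" using i j by (cases i; cases j) auto
  qed
  have img: "tofun n xs ` {1..n} = {1..n}"
  proof -
    have "tofun n xs ` {1..n} = (\<lambda>i. xs ! (i - 1)) ` {1..n}" by (auto simp: tofun_def)
    also have "\<dots> = (\<lambda>i. xs ! i) ` {0..<n}"
    proof -
      have "{1..n} = Suc ` {0..<n}" by (auto simp: image_iff)
      hence "(\<lambda>i. xs ! (i - 1)) ` {1..n} = (\<lambda>i. xs ! (i - 1)) ` (Suc ` {0..<n})" by (rule arg_cong)
      also have "\<dots> = (\<lambda>i. xs ! i) ` {0..<n}" by (simp only: image_image) simp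
      finally show ?thesis .
    qed
    also have "\<dots> = set xs" using len by (auto simp: set_conv_nth)
    finally show ?thesis using d(2) by simp
  qed
  have bb: "bij_betw (tofun n xs) {1..n} {1..n}" unfolding bij_betw_def using inj img by blast
  show ?thesis unfolding perms_def mem_Collect_eq
    by (rule bij_imp_permutes[OF bb]) (auto simp: tofun_def)
qed

lemma tofun_bij: "bij_betw (tofun n) (permutations_of_set {1..n}) (perms n)"
proof (rule bij_betw_imageI)
  show "inj_on (tofun n) (permutations_of_set {1..n})"
  proof (rule inj_onI)
    fix xs ys assume xs: "xs \<in> permutations_of_set {1..n}" and ys: "ys \<in> permutations_of_set {1..n}"
      and e: "tofun n xs = tofun n ys"
    show "xs = ys"
    proof (rule nth_equalityI)
      show "length xs = length ys" using len_P[OF xs] len_P[OF ys] by simp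
      fix i assume "i < length xs"
      hence i: "Suc i \<in> {1..n}" using len_P[OF xs] by simp
      have "tofun n xs (Suc i) = tofun n ys (Suc i)" using e by simp
      thus "xs ! i = ys ! i" using i by (simp add: tofun_def)
    qed
  qed
  show "tofun n ` permutations_of_set {1..n} = perms n"
  proof
    show "tofun n ` permutations_of_set {1..n} \<subseteq> perms n" using tofun_perm by auto
    show "perms n \<subseteq> tofun n ` permutations_of_set {1..n}"
    proof
      fix p assume "p \<in> perms n"
      hence p: "p permutes {1..n}" by (simp add: perms_def)
      define xs where "xs = map p [1..<Suc n]"
      have "xs \<in> permutations_of_set {1..n}"
      proof
        show "set xs = {1..n}" unfolding xs_def
          by (simp only: set_map set_upt atLeastLessThanSuc_atLeastAtMost permutes_image[OF p])
        show "distinct xs" unfolding xs_def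
          by (simp add: distinct_map inj_on_subset[OF permutes_inj[OF p]])
      qed
      moreover have "tofun n xs = p"
      proof
        fix i show "tofun n xs i = p i"
          using permutes_not_in[OF p, of i] by (auto simp del: upt_Suc simp: tofun_def xs_def nth_upt)
      qed
      ultimately show "p \<in> tofun n ` permutations_of_set {1..n}" by force
    qed
  qed
qed

lemma tofun_swap:
  assumes xs: "xs \<in> permutations_of_set {1..n}" and a: "a \<in> {1..n}" and b: "b \<in> {1..n}"
  shows "tofun n (map (Transposition.transpose a b) xs) = Transposition.transpose a b \<circ> tofun n xs"
proof
  fix i
  show "tofun n (map (Transposition.transpose a b) xs) i = (Transposition.transpose a b \<circ> tofun n xs) i"
  proof (cases "i \<in> {1..n}")
    case True
    thus ?thesis using len_P[OF xs] by (auto simp: tofun_def)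
  next
    case False
    hence "i \<noteq> a" "i \<noteq> b" using a b by auto
    moreover have "tofun n (map (Transposition.transpose a b) xs) i = i" "tofun n xs i = i"
      using False unfolding tofun_def by (simp_all only: if_False)
    ultimately show ?thesis by simp
  qed
qed



lemma main_fixed:
  fixes k n :: nat and tau :: "nat \<Rightarrow> nat" and t :: real
  assumes k: "k \<ge> 1" and n: "n \<ge> k" and t: "t \<ge> real ((n - 1) choose (k - 1))"
  shows "dev_prob k tau n t \<le> 2 * exp (- (t ^ 2) / (2 * real n ^ (2 * k - 1)))"
proof -
  define B where "B = (n - 1) choose (k - 1)"
  have Bpos: "B \<ge> 1" unfolding B_def using zero_less_binomial[of "k - 1" "n - 1"] n by linarith
  have tpos: "t > 0" using t Bpos unfolding B_def by linarith
  have npos: "n > 0" using k n by simp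
  let ?A = "{1..n::nat}"
  let ?P = "permutations_of_set ?A"
  define G where "G = occ_count k tau n"
  define f where "f xs = G (tofun n xs)" for xs
  have bij: "bij_betw (tofun n) ?P (perms n)" by (rule tofun_bij)
  have H: "\<bar>f (map (Transposition.transpose a b) xs) - f xs\<bar> \<le> 2 * real B"
    if xs: "xs \<in> ?P" and a: "a \<in> ?A" and b: "b \<in> ?A" for xs a b
  proof -
    have p: "tofun n xs permutes ?A" using tofun_perm[OF xs] by (simp add: perms_def)
    show ?thesis unfolding f_def tofun_swap[OF xs a b] G_def B_def by (rule occ_diff[OF p a b])
  qed
  have cpos: "2 * real B > 0" using Bpos by simp
  have cA: "card ?A > 0" using npos by simp
  have tail: "real (card {xs\<in>?P. \<bar>f xs - (\<Sum>ys\<in>?P. f ys) / card ?P\<bar> > t})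
     \<le> 2 * card ?P * exp (- (2 * t\<^sup>2 / (card ?A * (2 * real B)\<^sup>2)))"
    by (rule two_tail[OF _ cpos tpos cA H]) auto
  have cP: "card ?P = card (perms n)" by (rule bij_betw_same_card[OF bij])
  have sP: "(\<Sum>ys\<in>?P. f ys) = (\<Sum>p\<in>perms n. G p)" unfolding f_def by (rule sum.reindex_bij_betw[OF bij])
  have mean: "occ_mean k tau n = (\<Sum>ys\<in>?P. f ys) / card ?P"
    unfolding occ_mean_def sP cP G_def ..
  have inj: "inj_on (tofun n) ?P" using bij by (rule bij_betw_imp_inj_on)
  have ev: "{p\<in>perms n. \<bar>G p - occ_mean k tau n\<bar> > t} = tofun n ` {xs\<in>?P. \<bar>f xs - occ_mean k tau n\<bar> > t}"
    using bij unfolding bij_betw_def f_def by auto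
  have cev: "card {p\<in>perms n. \<bar>G p - occ_mean k tau n\<bar> > t} = card {xs\<in>?P. \<bar>f xs - occ_mean k tau n\<bar> > t}"
    unfolding ev by (rule card_image) (rule inj_on_subset[OF inj], auto)
  have Npos: "real (card ?P) > 0" by simp
  have "dev_prob k tau n t = real (card {xs\<in>?P. \<bar>f xs - (\<Sum>ys\<in>?P. f ys) / card ?P\<bar> > t}) / card ?P"
    unfolding dev_prob_def G_def[symmetric] cev unfolding cP[symmetric] mean ..
  also have "\<dots> \<le> 2 * exp (- (2 * t\<^sup>2 / (card ?A * (2 * real B)\<^sup>2)))"
    using tail Npos by (simp add: divide_simps mult.commute)
  also have "\<dots> \<le> 2 * exp (- (t ^ 2) / (2 * real n ^ (2 * k - 1)))"
  proof -
    have "B \<le> (n - 1) ^ (k - 1)" unfolding B_def by (rule binomial_le_pow) (use n in simp)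
    also have "\<dots> \<le> n ^ (k - 1)" by (rule power_mono) auto
    finally have "real B \<le> real n ^ (k - 1)" by (simp flip: of_nat_power)
    hence "(real B)\<^sup>2 \<le> (real n ^ (k - 1))\<^sup>2" using Bpos by (intro power_mono) auto
    hence "real n * (real B)\<^sup>2 \<le> real n * (real n ^ (k - 1))\<^sup>2" by (intro mult_left_mono) auto
    also have "real n * (real n ^ (k - 1))\<^sup>2 = real n ^ (2 * k - 1)"
    proof -
      have "real n * (real n ^ (k - 1))\<^sup>2 = real n ^ (Suc (2 * (k - 1)))"
        by (simp add: power_mult[symmetric] mult.commute)
      also have "Suc (2 * (k - 1)) = 2 * k - 1" using k by simp
      finally show ?thesis .
    qed
    finally have nb: "real n * (real B)\<^sup>2 \<le> real n ^ (2 * k - 1)" .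
    have pos1: "real n * (real B)\<^sup>2 > 0" using npos Bpos by simp
    have "t ^ 2 / (2 * real n ^ (2 * k - 1)) \<le> t ^ 2 / (2 * (real n * (real B)\<^sup>2))"
      using nb pos1 npos by (intro divide_left_mono) (auto intro!: mult_pos_pos)
    also have "\<dots> \<le> 2 * t\<^sup>2 / (real (card ?A) * (2 * real B)\<^sup>2)"
      using pos1 by (simp add: power_mult_distrib field_simps)
    finally have "- (2 * t\<^sup>2 / (real (card ?A) * (2 * real B)\<^sup>2)) \<le> - (t ^ 2) / (2 * real n ^ (2 * k - 1))"
      by simp
    thus ?thesis by simp
  qed
  finally show ?thesis .
qed

theorem mainTheorem12:
  fixes k :: nat
  assumes "k \<ge> 1"
  shows "\<exists>C::real. C > 0 \<and>
    (\<forall>tau n (t::real). tau \<in> perms k \<longrightarrow> n \<ge> k \<longrightarrow> t \<ge> real ((n - 1) choose (k - 1)) \<longrightarrow>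
       dev_prob k tau n t \<le> 2 * exp (- (t ^ 2) / (C * real n ^ (2 * k - 1))))"
  using main_fixed[OF assms] by (intro exI[of _ 2]) auto


end
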